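(* Let $G$ be a graph and $u,v$ vertices with $d(u,v) \geq 3$, and let the sets $A_k, B_k$ ($k \ge 1$) be defined as in the context. Then for every $k \geq 1$, every vertex $x \in A_k$ with $N(x) \cap N^k(u,v) = \emptyset$ is a witness of the non-edge $uv$, i.e. $|d(x,u) - d(x,v)| \geq 2$.
   Context: $d$ is the graph distance in $G$ and $N(X)$ is the set of neighbours of vertices in $X$ ($N(x)=N(\{x\})$). For $k\ge 1$, $N^k(u,v) = \{x \in V(G) : \min(d(u,x),d(v,x)) = k\}$. Define $A_1 = N^1(u,v)$, $B_1 = \emptyset$, and for $k \geq 2$: $\mathcal{B}^k_1 = N(B_{k-1})$; $\mathcal{B}^k_2 = N(\{x \in A_{k-1} : N(x) \cap N^{k-1}(u,v) \neq \emptyset\})$; $\mathcal{B}^k_3 = \{x \in N^k(u,v) : |N(x) \cap A_{k-1}| \geq 2\}$; $B_k = N^k(u,v) \cap (\mathcal{B}^k_1 \cup \mathcal{B}^k_2 \cup \mathcal{B}^k_3)$ and $A_k = N^k(u,v) \setminus B_k$. A vertex $s$ is a witness of the non-edge $uv$ if $|d(s,u)-d(s,v)| \ge 2$. *)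

theory Defs
  imports Main "HOL-Library.Extended_Nat"
begin

definition graph :: "'a set \<Rightarrow> ('a \<Rightarrow> 'a \<Rightarrow> bool) \<Rightarrow> bool" where
  "graph V E \<longleftrightarrow> finite V \<and> (\<forall>x y. E x y \<longrightarrow> x \<in> V \<and> y \<in> V)
      \<and> (\<forall>x y. E x y \<longrightarrow> E y x) \<and> (\<forall>x. \<not> E x x)"

inductive walk :: "('a \<Rightarrow> 'a \<Rightarrow> bool) \<Rightarrow> nat \<Rightarrow> 'a \<Rightarrow> 'a \<Rightarrow> bool" for E where
  walk0: "walk E 0 x x"
| walkS: "E x y \<Longrightarrow> walk E n y z \<Longrightarrow> walk E (Suc n) x z"

definition dist :: "('a \<Rightarrow> 'a \<Rightarrow> bool) \<Rightarrow> 'a \<Rightarrow> 'a \<Rightarrow> enat" where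
  "dist E x y = (if \<exists>n. walk E n x y then enat (LEAST n. walk E n x y) else \<infinity>)"

definition nbhd :: "'a set \<Rightarrow> ('a \<Rightarrow> 'a \<Rightarrow> bool) \<Rightarrow> 'a set \<Rightarrow> 'a set" where
  "nbhd V E X = {y \<in> V. \<exists>x\<in>X. E x y}"

definition Nk :: "'a set \<Rightarrow> ('a \<Rightarrow> 'a \<Rightarrow> bool) \<Rightarrow> 'a \<Rightarrow> 'a \<Rightarrow> nat \<Rightarrow> 'a set" where
  "Nk V E u v k = {x \<in> V. min (dist E u x) (dist E v x) = enat k}"

text \<open>ABrec V E u v j = (A_{j+1}, B_{j+1}).\<close>
primrec ABrec :: "'a set \<Rightarrow> ('a \<Rightarrow> 'a \<Rightarrow> bool) \<Rightarrow> 'a \<Rightarrow> 'a \<Rightarrow> nat \<Rightarrow> 'a set \<times> 'a set" where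
  "ABrec V E u v 0 = (Nk V E u v 1, {})"
| "ABrec V E u v (Suc j) =
     (let Ap = fst (ABrec V E u v j); Bp = snd (ABrec V E u v j);
          k = Suc (Suc j);
          B1 = nbhd V E Bp;
          B2 = nbhd V E {x \<in> Ap. nbhd V E {x} \<inter> Nk V E u v (k - 1) \<noteq> {}};
          B3 = {x \<in> Nk V E u v k. card (nbhd V E {x} \<inter> Ap) \<ge> 2};
          B = Nk V E u v k \<inter> (B1 \<union> B2 \<union> B3)
      in (Nk V E u v k - B, B))"

definition Aset :: "'a set \<Rightarrow> ('a \<Rightarrow> 'a \<Rightarrow> bool) \<Rightarrow> 'a \<Rightarrow> 'a \<Rightarrow> nat \<Rightarrow> 'a set" where
  "Aset V E u v k = fst (ABrec V E u v (k - 1))"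

definition Bset :: "'a set \<Rightarrow> ('a \<Rightarrow> 'a \<Rightarrow> bool) \<Rightarrow> 'a \<Rightarrow> 'a \<Rightarrow> nat \<Rightarrow> 'a set" where
  "Bset V E u v k = snd (ABrec V E u v (k - 1))"

definition witness :: "('a \<Rightarrow> 'a \<Rightarrow> bool) \<Rightarrow> 'a \<Rightarrow> 'a \<Rightarrow> 'a \<Rightarrow> bool" where
  "witness E u v s \<longleftrightarrow> dist E s u + 2 \<le> dist E s v \<or> dist E s v + 2 \<le> dist E s u"

end

theory Submission
  imports Defs
begin

lemma ep1: "enat m + 1 = enat (Suc m)" by (simp add: eSuc_enat[symmetric] plus_1_eSuc)
lemma ep2: "enat m + 2 = enat (Suc (Suc m))"
proof -
  have "(2::enat) = 1 + 1" by simp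
  then show ?thesis by (metis ep1 add.assoc)
qed
lemma e3: "(3::enat) \<le> enat n \<longleftrightarrow> 3 \<le> n" by (metis enat_ord_simps(1) numeral_eq_enat)

lemma walk_snoc: "walk E n a x \<Longrightarrow> E x y \<Longrightarrow> walk E (Suc n) a y"
  by (induction rule: walk.induct) (auto intro: walk.intros)

lemma walk0_eq: assumes "walk E 0 a b" shows "a = b"
  using assms by (cases rule: walk.cases) auto

lemma walk_last: "walk E (Suc n) a x \<Longrightarrow> \<exists>y. walk E n a y \<and> E y x"
proof (induction n arbitrary: a)
  case 0
  then obtain y where "E a y" "walk E 0 y x" by (cases rule: walk.cases) auto
  then show ?case using walk0_eq[of E y x] by (auto intro: walk0)
next
  case (Suc n)
  from Suc.prems obtain b where "E a b" "walk E (Suc n) b x" by (cases rule: walk.cases) auto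
  with Suc.IH obtain y where "walk E n b y" "E y x" by blast
  then show ?case using \<open>E a b\<close> by (auto intro: walkS)
qed

lemma walk_sym: assumes s: "\<forall>x y. E x y \<longrightarrow> E y x" shows "walk E n a b \<Longrightarrow> walk E n b a"
proof (induction rule: walk.induct)
  case (walk0 x) then show ?case by (rule walk.walk0)
next
  case (walkS x y n z) then show ?case using s by (auto intro: walk_snoc)
qed

lemma dist_le: "walk E n a b \<Longrightarrow> dist E a b \<le> enat n"
  unfolding dist_def by (auto intro: Least_le)

lemma dist_enat: "dist E a b = enat m \<Longrightarrow> walk E m a b"
  unfolding dist_def by (auto split: if_splits intro: LeastI)

lemma dist_sym: "\<forall>x y. E x y \<longrightarrow> E y x \<Longrightarrow> dist E a b = dist E b a"
proof -
  assume s: "\<forall>x y. E x y \<longrightarrow> E y x"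
  have e: "(\<lambda>n. walk E n a b) = (\<lambda>n. walk E n b a)" using walk_sym[OF s] by blast
  show ?thesis unfolding dist_def by (simp only: e)
qed

lemma dist_step: "E x y \<Longrightarrow> dist E a y \<le> dist E a x + 1"
proof (cases "dist E a x")
  case (enat m)
  assume "E x y"
  then have "walk E (Suc m) a y" by (rule walk_snoc[OF dist_enat[OF enat]])
  then have "dist E a y \<le> enat (Suc m)" by (rule dist_le)
  then show ?thesis using enat by (simp add: ep1)
qed simp

lemma dist_zero: "dist E a b = enat 0 \<Longrightarrow> a = b"
  by (metis dist_enat walk0_eq)

lemma dist_pred: "dist E a x = enat (Suc n) \<Longrightarrow> \<exists>y. E y x \<and> dist E a y = enat n"
proof -
  assume d: "dist E a x = enat (Suc n)"
  from walk_last[OF dist_enat[OF d]] obtain y where w: "walk E n a y" "E y x" by blast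
  have "dist E a y \<le> enat n" using dist_le[OF w(1)] .
  moreover have "dist E a x \<le> dist E a y + 1" using dist_step[of E y x a, OF w(2)] .
  ultimately have "dist E a y = enat n" using d
    by (cases "dist E a y") (auto simp: ep1)
  then show ?thesis using w by blast
qed

lemma graph_sym: "graph V E \<Longrightarrow> \<forall>x y. E x y \<longrightarrow> E y x"
  unfolding graph_def by blast

lemma graph_V: "graph V E \<Longrightarrow> E x y \<Longrightarrow> x \<in> V \<and> y \<in> V"
  unfolding graph_def by blast

lemma graph_fin: "graph V E \<Longrightarrow> finite V"
  unfolding graph_def by blast

lemma AB_union: "fst (ABrec V E u v i) \<union> snd (ABrec V E u v i) = Nk V E u v (Suc i)"
  by (cases i) (auto simp: Let_def)

lemma AB_disj: "fst (ABrec V E u v i) \<inter> snd (ABrec V E u v i) = {}"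
  by (cases i) (auto simp: Let_def)

lemma Nk_swap: "Nk V E v u k = Nk V E u v k"
  by (auto simp: Nk_def min.commute)

lemma ABrec_swap: "ABrec V E v u i = ABrec V E u v i"
  by (induction i) (simp_all add: Let_def Nk_swap)

lemma claim:
  assumes g: "graph V E" and d3: "dist E u v \<ge> 3"
  shows "x \<in> fst (ABrec V E u v i) \<Longrightarrow> \<not> (dist E u x = enat (Suc i) \<and> dist E v x = enat (Suc i))"
proof (induction i arbitrary: x)
  case 0
  show ?case
  proof
    assume h: "dist E u x = enat (Suc 0) \<and> dist E v x = enat (Suc 0)"
    from h dist_pred[of E u x 0] obtain a where a: "E a x" "dist E u a = enat 0"
      by blast
    from h dist_pred[of E v x 0] obtain b where b: "E b x" "dist E v b = enat 0"
      by blast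
    have "a = u" "b = v" using a b dist_zero[of E u a] dist_zero[of E v b] by auto
    then have "E x v" using b graph_sym[OF g] by blast
    then have "dist E u v \<le> dist E u x + 1" by (rule dist_step)
    with h have "dist E u v \<le> enat (Suc (Suc 0))" by (simp add: ep1)
    from order_trans[OF d3 this] have "(3::enat) \<le> enat (Suc (Suc 0))" .
    then show False unfolding e3 by simp
  qed
next
  case (Suc i)
  note s = graph_sym[OF g]
  from Suc.prems have xN: "x \<in> Nk V E u v (Suc (Suc i))"
    and xB1: "x \<notin> nbhd V E (snd (ABrec V E u v i))"
    and xB2: "x \<notin> nbhd V E {y \<in> fst (ABrec V E u v i). nbhd V E {y} \<inter> Nk V E u v (Suc i) \<noteq> {}}"
    and xB3: "\<not> card (nbhd V E {x} \<inter> fst (ABrec V E u v i)) \<ge> 2"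
    by (auto simp: Let_def)
  have xV: "x \<in> V" using xN by (simp add: Nk_def)
  show ?case
  proof
    assume h: "dist E u x = enat (Suc (Suc i)) \<and> dist E v x = enat (Suc (Suc i))"
    from h dist_pred[of E u x "Suc i"] obtain a where a: "E a x" "dist E u a = enat (Suc i)"
      by auto
    from h dist_pred[of E v x "Suc i"] obtain b where b: "E b x" "dist E v b = enat (Suc i)"
      by auto
    have "E x a" using a s by blast
    then have "dist E v x \<le> dist E v a + 1" using s dist_step[of E a x v] a by blast
    then have "dist E v a \<ge> enat (Suc i)" using h
      by (cases "dist E v a") (auto simp: ep1)
    then have aN: "a \<in> Nk V E u v (Suc i)" using a graph_V[OF g a(1)]
      by (auto simp: Nk_def min_def)
    have "E x b" using b s by blast
    then have "dist E u x \<le> dist E u b + 1" using s dist_step[of E b x u] b by blast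
    then have "dist E u b \<ge> enat (Suc i)" using h
      by (cases "dist E u b") (auto simp: ep1)
    then have bN: "b \<in> Nk V E u v (Suc i)" using b graph_V[OF g b(1)]
      by (auto simp: Nk_def min_def)
    have aA: "a \<in> fst (ABrec V E u v i)"
    proof (rule ccontr)
      assume "a \<notin> fst (ABrec V E u v i)"
      then have "a \<in> snd (ABrec V E u v i)" using aN AB_union[of V E u v i] by blast
      then show False using xB1 xV a(1) by (auto simp: nbhd_def)
    qed
    have bA: "b \<in> fst (ABrec V E u v i)"
    proof (rule ccontr)
      assume "b \<notin> fst (ABrec V E u v i)"
      then have "b \<in> snd (ABrec V E u v i)" using bN AB_union[of V E u v i] by blast
      then show False using xB1 xV b(1) by (auto simp: nbhd_def)
    qed
    show False
    proof (cases "a = b")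
      case True
      then show ?thesis using Suc.IH[OF aA] a b by simp
    next
      case False
      have sub: "{a, b} \<subseteq> nbhd V E {x} \<inter> fst (ABrec V E u v i)"
        using aA bA \<open>E x a\<close> \<open>E x b\<close> graph_V[OF g a(1)] graph_V[OF g b(1)]
        by (auto simp: nbhd_def)
      have "finite (nbhd V E {x} \<inter> fst (ABrec V E u v i))"
        using graph_fin[OF g] by (auto simp: nbhd_def)
      then have "card {a, b} \<le> card (nbhd V E {x} \<inter> fst (ABrec V E u v i))"
        using sub card_mono by blast
      then show False using xB3 False by simp
    qed
  qed
qed

lemma step_y:
  assumes g: "graph V E" and d3: "dist E u v \<ge> 3"
    and xA: "x \<in> fst (ABrec V E u v i)"
    and nx: "nbhd V E {x} \<inter> Nk V E u v (Suc i) = {}"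
    and du: "dist E u x = enat (Suc i)"
    and nw: "\<not> (dist E u x + 2 \<le> dist E v x)"
  shows "\<exists>y. E y x \<and> y \<in> V \<and> dist E u y = enat i \<and> dist E v y = enat (Suc i)"
proof -
  note s = graph_sym[OF g]
  have xN: "x \<in> Nk V E u v (Suc i)" using xA AB_union[of V E u v i] by blast
  then have ge: "dist E v x \<ge> enat (Suc i)" using du by (auto simp: Nk_def min_def split: if_splits)
  have ne: "dist E v x \<noteq> enat (Suc i)" using claim[OF g d3 xA] du by blast
  have dv: "dist E v x = enat (Suc (Suc i))"
    using ge ne nw du by (cases "dist E v x") (auto simp: ep2)
  from dist_pred[OF dv] obtain y where y: "E y x" "dist E v y = enat (Suc i)" by blast
  have yV: "y \<in> V" using graph_V[OF g y(1)] by blast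
  have "E x y" using y s by blast
  have "dist E u x \<le> dist E u y + 1" using dist_step[of E y x u] y by blast
  then have ge2: "dist E u y \<ge> enat i" using du
    by (cases "dist E u y") (auto simp: ep1)
  have "\<not> dist E u y \<ge> enat (Suc i)"
  proof
    assume "dist E u y \<ge> enat (Suc i)"
    then have "y \<in> Nk V E u v (Suc i)" using y yV by (auto simp: Nk_def min_def)
    moreover have "y \<in> nbhd V E {x}" using \<open>E x y\<close> yV by (auto simp: nbhd_def)
    ultimately show False using nx by blast
  qed
  then have "dist E u y = enat i" using ge2
    by (cases "dist E u y") auto
  then show ?thesis using y yV by blast
qed

lemma mainlem:
  assumes g: "graph V E" and d3: "dist E u v \<ge> 3"
  shows "x \<in> fst (ABrec V E u v i) \<Longrightarrow> nbhd V E {x} \<inter> Nk V E u v (Suc i) = {}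
     \<Longrightarrow> dist E u x = enat (Suc i) \<Longrightarrow> dist E u x + 2 \<le> dist E v x"
proof (induction i arbitrary: x)
  case 0
  show ?case
  proof (rule ccontr)
    assume "\<not> ?thesis"
    from step_y[OF g d3 "0.prems"(1,2,3) this] obtain y where
      y: "E y x" "dist E u y = enat 0" "dist E v y = enat (Suc 0)" by blast
    then have "y = u" using dist_zero[of E u y] by simp
    then have "dist E u v = enat (Suc 0)" using y dist_sym[OF graph_sym[OF g], of v u] by simp
    then show False using d3 unfolding e3 by simp
  qed
next
  case (Suc i)
  from Suc.prems(1) have xB1: "x \<notin> nbhd V E (snd (ABrec V E u v i))"
    and xB2: "x \<notin> nbhd V E {y \<in> fst (ABrec V E u v i). nbhd V E {y} \<inter> Nk V E u v (Suc i) \<noteq> {}}"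
    by (auto simp: Let_def)
  have xV: "x \<in> V" using Suc.prems(1) AB_union[of V E u v "Suc i"] by (auto simp: Nk_def)
  show ?case
  proof (rule ccontr)
    assume "\<not> ?thesis"
    from step_y[OF g d3 Suc.prems(1,2,3) this] obtain y where
      y: "E y x" "y \<in> V" "dist E u y = enat (Suc i)" "dist E v y = enat (Suc (Suc i))" by blast
    have yN: "y \<in> Nk V E u v (Suc i)" using y by (auto simp: Nk_def min_def)
    have yA: "y \<in> fst (ABrec V E u v i)"
    proof (rule ccontr)
      assume "y \<notin> fst (ABrec V E u v i)"
      then have "y \<in> snd (ABrec V E u v i)" using yN AB_union[of V E u v i] by blast
      then show False using xB1 xV y(1) by (auto simp: nbhd_def)
    qed
    have ny: "nbhd V E {y} \<inter> Nk V E u v (Suc i) = {}"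
    proof (rule ccontr)
      assume "nbhd V E {y} \<inter> Nk V E u v (Suc i) \<noteq> {}"
      then have "x \<in> nbhd V E {y \<in> fst (ABrec V E u v i). nbhd V E {y} \<inter> Nk V E u v (Suc i) \<noteq> {}}"
        using yA xV y(1) by (auto simp: nbhd_def)
      then show False using xB2 by blast
    qed
    from Suc.IH[OF yA ny y(3)] y show False by (simp add: ep2)
  qed
qed

theorem mainTheorem7:
  fixes V :: "'a set" and E :: "'a \<Rightarrow> 'a \<Rightarrow> bool" and u v x :: 'a and k :: nat
  assumes "graph V E" and "u \<in> V" and "v \<in> V"
    and "dist E u v \<ge> 3"
    and "k \<ge> 1"
    and "x \<in> Aset V E u v k"
    and "nbhd V E {x} \<inter> Nk V E u v k = {}"
  shows "witness E u v x"
proof -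
  note g = assms(1)
  note s = graph_sym[OF g]
  obtain i where k: "k = Suc i" using assms(5) by (cases k) auto
  have xA: "x \<in> fst (ABrec V E u v i)" using assms(6) k by (simp add: Aset_def)
  have nx: "nbhd V E {x} \<inter> Nk V E u v (Suc i) = {}" using assms(7) k by simp
  have xN: "x \<in> Nk V E u v (Suc i)" using xA AB_union[of V E u v i] by blast
  then have "dist E u x = enat (Suc i) \<or> dist E v x = enat (Suc i)"
    by (auto simp: Nk_def min_def split: if_splits)
  then show ?thesis
  proof
    assume "dist E u x = enat (Suc i)"
    from mainlem[OF g assms(4) xA nx this] show ?thesis
      unfolding witness_def using dist_sym[OF s, of x u] dist_sym[OF s, of x v] by simp
  next
    assume h: "dist E v x = enat (Suc i)"
    have d3': "dist E v u \<ge> 3" using assms(4) dist_sym[OF s, of u v] by simp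
    have xA': "x \<in> fst (ABrec V E v u i)" using xA ABrec_swap by metis
    have nx': "nbhd V E {x} \<inter> Nk V E v u (Suc i) = {}" using nx Nk_swap by metis
    from mainlem[OF g d3' xA' nx' h] show ?thesis
      unfolding witness_def using dist_sym[OF s, of x u] dist_sym[OF s, of x v] by simp
  qed
qed

end
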